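(* For each $t$, the iterate $(x_t,y_t)$ satisfies \[ \sum_{n<t}\bar L_n(x_t,y_t)\ge\min_{x\in\mathcal{X}}\max_{y\in\mathcal{Y}}\sum_{n<t}\bar L_n(x,y), \] and \[ \min_{x\in\mathcal{X}}\max_{y\in\mathcal{Y}}\sum_{n<t}\bar L_n(x,y)-\theta_t^\top x_t^{**}\ge\sum_{n<t}\bar L_n(x_t,y_t)-\theta_t^\top x_t, \] where $x_t^{**}\in\arg\min_{x\in\mathcal{X}}\max_{y\in\mathcal{Y}}\sum_{n<t}\bar L_n(x,y)$.
   Context: Let $\mathcal{X}\subseteq\mathbb{R}^d$ be compact. For $t=1,\dots,T$, $f_t,c_{it}:\mathcal{X}\to\mathbb{R}$ ($i=1,\dots,I$) are $G_0$-Lipschitz w.r.t. $\ell_1$, $b_i\ge0$, and for $y=(\gamma_1,\dots,\gamma_I)$, $L_t(x,y)=f_t(x)+\sum_i\gamma_i[c_{it}(x)-b_i]$. Fix $\lambda>0$, $y_{\max}>0$, $\mathcal{Y}=[0,y_{\max}]^I$, and $\bar L_n(x,y)=L_n(x,y)+\frac{\lambda}{n^{1/9}}\sum_i\log(\gamma_i+1)$. A global minimax point of $h$ on $\mathcal{X}\times\mathcal{Y}$ is $(x^*,y^* )$ with $h(x^*,y)\le h(x^*,y^* )\le\max_{y'\in\mathcal{Y}}h(x,y')$ for all $x,y$. Algorithm (FTDPL with $M=1$): $\eta=T^{-2/3}$; at each period $t$, draw $\theta_t\in\mathbb{R}^d$ with i.i.d. coordinates exponentially distributed with parameter $\eta$,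 and let $(x_t,y_t)$ be a global minimax point of $(x,y)\mapsto\sum_{n<t}\bar L_n(x,y)-\theta_t^\top x$ on $\mathcal{X}\times\mathcal{Y}$. *)

theory Defs
  imports "HOL-Analysis.Analysis"
begin

definition l1_dist :: "real ^ 'd \<Rightarrow> real ^ 'd \<Rightarrow> real" where
  "l1_dist x x' = (\<Sum>j\<in>UNIV. \<bar>x $ j - x' $ j\<bar>)"

definition lipschitz_l1 :: "(real ^ 'd) set \<Rightarrow> real \<Rightarrow> (real ^ 'd \<Rightarrow> real) \<Rightarrow> bool" where
  "lipschitz_l1 X G g \<longleftrightarrow> (\<forall>x\<in>X. \<forall>x'\<in>X. \<bar>g x - g x'\<bar> \<le> G * l1_dist x x')"

definition Ybox :: "real \<Rightarrow> (real ^ 'i) set" where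
  "Ybox ymax = {y. \<forall>i. 0 \<le> y $ i \<and> y $ i \<le> ymax}"

definition Lag :: "(nat \<Rightarrow> real ^ 'd \<Rightarrow> real) \<Rightarrow> (nat \<Rightarrow> 'i::finite \<Rightarrow> real ^ 'd \<Rightarrow> real)
    \<Rightarrow> real ^ 'i \<Rightarrow> nat \<Rightarrow> real ^ 'd \<Rightarrow> real ^ 'i \<Rightarrow> real" where
  "Lag f c b n x y = f n x + (\<Sum>i\<in>UNIV. y $ i * (c n i x - b $ i))"

definition Lbar :: "real \<Rightarrow> (nat \<Rightarrow> real ^ 'd \<Rightarrow> real) \<Rightarrow> (nat \<Rightarrow> 'i::finite \<Rightarrow> real ^ 'd \<Rightarrow> real)
    \<Rightarrow> real ^ 'i \<Rightarrow> nat \<Rightarrow> real ^ 'd \<Rightarrow> real ^ 'i \<Rightarrow> real" where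
  "Lbar lam f c b n x y = Lag f c b n x y
     + lam / (real n powr (1/9)) * (\<Sum>i\<in>UNIV. ln (y $ i + 1))"

text \<open>Cumulative regularized Lagrangian sum_{n<t} bar L_n (periods are 1,2,...).\<close>
definition cumLbar :: "real \<Rightarrow> (nat \<Rightarrow> real ^ 'd \<Rightarrow> real) \<Rightarrow> (nat \<Rightarrow> 'i::finite \<Rightarrow> real ^ 'd \<Rightarrow> real)
    \<Rightarrow> real ^ 'i \<Rightarrow> nat \<Rightarrow> real ^ 'd \<Rightarrow> real ^ 'i \<Rightarrow> real" where
  "cumLbar lam f c b t x y = (\<Sum>n\<in>{1..<t}. Lbar lam f c b n x y)"

definition global_minimax :: "('a \<Rightarrow> 'b \<Rightarrow> real) \<Rightarrow> 'a set \<Rightarrow> 'b set \<Rightarrow> 'a \<Rightarrow> 'b \<Rightarrow> bool" where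
  "global_minimax h X Y xs ys \<longleftrightarrow> xs \<in> X \<and> ys \<in> Y \<and>
     (\<forall>x\<in>X. \<forall>y\<in>Y. h xs y \<le> h xs ys \<and> h xs ys \<le> (SUP y'\<in>Y. h x y'))"

end

theory Submission imports Defs begin
lemma bddY:
  fixes lam ymax :: real and x :: "real^'d" and c :: "nat \<Rightarrow> 'i::finite \<Rightarrow> real ^ 'd \<Rightarrow> real"
  shows "bdd_above ((\<lambda>y. cumLbar lam f c b t x y) ` Ybox ymax)"
proof -
  define K where "K = (\<Sum>n\<in>{1..<t}. \<bar>f n x\<bar> + (\<Sum>i\<in>UNIV. \<bar>ymax\<bar> * \<bar>c n i x - b $ i\<bar>)
     + \<bar>lam / (real n powr (1/9))\<bar> * (\<Sum>i\<in>(UNIV::'i set). \<bar>ymax\<bar>))"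
  have "cumLbar lam f c b t x y \<le> K" if y: "y \<in> Ybox ymax" for y
    unfolding cumLbar_def K_def
  proof (rule sum_mono)
    fix n assume "n \<in> {1..<t}"
    have yi: "0 \<le> y $ i" "y $ i \<le> ymax" for i using y by (auto simp: Ybox_def)
    have 1: "y $ i * (c n i x - b $ i) \<le> \<bar>ymax\<bar> * \<bar>c n i x - b $ i\<bar>" for i
    proof -
      have "y $ i * (c n i x - b $ i) \<le> \<bar>y $ i\<bar> * \<bar>c n i x - b $ i\<bar>"
        by (metis abs_ge_self abs_mult)
      also have "\<dots> \<le> \<bar>ymax\<bar> * \<bar>c n i x - b $ i\<bar>"
        using yi[of i] by (intro mult_right_mono) auto
      finally show ?thesis .
    qed
    have 2: "\<bar>ln (y $ i + 1)\<bar> \<le> \<bar>ymax\<bar>" for i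
    proof -
      have "0 \<le> ln (y $ i + 1)" using yi[of i] by simp
      moreover have "ln (y $ i + 1) \<le> y $ i" using yi[of i] ln_add_one_self_le_self[of "y $ i"] by (simp add: add.commute)
      ultimately show ?thesis using yi[of i] by auto
    qed
    have "lam / (real n powr (1/9)) * (\<Sum>i\<in>UNIV. ln (y $ i + 1))
        \<le> \<bar>lam / (real n powr (1/9))\<bar> * \<bar>\<Sum>i\<in>UNIV. ln (y $ i + 1)\<bar>"
      by (metis abs_ge_self abs_mult)
    also have "\<dots> \<le> \<bar>lam / (real n powr (1/9))\<bar> * (\<Sum>i\<in>(UNIV::'i set). \<bar>ymax\<bar>)"
      apply (intro mult_left_mono) 
      using order_trans[OF sum_abs sum_mono[OF 2]] by auto
    finally have 3: "lam / (real n powr (1/9)) * (\<Sum>i\<in>UNIV. ln (y $ i + 1))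
        \<le> \<bar>lam / (real n powr (1/9))\<bar> * (\<Sum>i\<in>(UNIV::'i set). \<bar>ymax\<bar>)" .
    have 4: "(\<Sum>i\<in>UNIV. y $ i * (c n i x - b $ i)) \<le> (\<Sum>i\<in>UNIV. \<bar>ymax\<bar> * \<bar>c n i x - b $ i\<bar>)"
      by (rule sum_mono[OF 1])
    show "Lbar lam f c b n x y \<le> \<bar>f n x\<bar> + (\<Sum>i\<in>UNIV. \<bar>ymax\<bar> * \<bar>c n i x - b $ i\<bar>)
     + \<bar>lam / (real n powr (1/9))\<bar> * (\<Sum>i\<in>(UNIV::'i set). \<bar>ymax\<bar>)"
      unfolding Lbar_def Lag_def using 3 4 by linarith
  qed
  then show ?thesis by (rule bdd_aboveI2)
qed
lemma sup_shift:
  fixes g :: "'a \<Rightarrow> real"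
  assumes ne: "A \<noteq> {}" and bd: "bdd_above (g ` A)"
  shows "(SUP y\<in>A. g y - a) = (SUP y\<in>A. g y) - a"
proof -
  obtain M where M: "\<And>y. y \<in> A \<Longrightarrow> g y \<le> M" using bd by (auto simp: bdd_above_def)
  have bd2: "bdd_above ((\<lambda>y. g y - a) ` A)"
    by (rule bdd_aboveI2[where M="M - a"]) (use M in auto)
  have le1: "(SUP y\<in>A. g y - a) \<le> (SUP y\<in>A. g y) - a"
    by (rule cSUP_least[OF ne]) (use cSUP_upper[OF _ bd] in auto)
  have "(SUP y\<in>A. g y) \<le> (SUP y\<in>A. g y - a) + a"
  proof (rule cSUP_least[OF ne])
    fix y assume "y \<in> A"
    then have "g y - a \<le> (SUP y\<in>A. g y - a)" by (rule cSUP_upper[OF _ bd2])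
    then show "g y \<le> (SUP y\<in>A. g y - a) + a" by simp
  qed
  with le1 show ?thesis by simp
qed

theorem lemma5:
  fixes X :: "(real ^ 'd) set"
    and f :: "nat \<Rightarrow> real ^ 'd \<Rightarrow> real"
    and c :: "nat \<Rightarrow> 'i::finite \<Rightarrow> real ^ 'd \<Rightarrow> real"
    and b :: "real ^ 'i"
    and G0 lam ymax :: real
    and T t :: nat
    and theta :: "real ^ 'd"
    and xt xss :: "real ^ 'd" and yt :: "real ^ 'i"
  assumes "compact X"
    and "\<And>n. n \<in> {1..T} \<Longrightarrow> lipschitz_l1 X G0 (f n)"
    and "\<And>n i. n \<in> {1..T} \<Longrightarrow> lipschitz_l1 X G0 (c n i)"
    and "\<And>i. b $ i \<ge> 0"
    and "lam > 0" and "ymax > 0"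
    and "t \<in> {1..T}"
    and "\<And>j. theta $ j \<ge> 0"
    and "global_minimax (\<lambda>x y. cumLbar lam f c b t x y - theta \<bullet> x) X (Ybox ymax) xt yt"
    and "xss \<in> X"
    and "(SUP y\<in>Ybox ymax. cumLbar lam f c b t xss y)
           = (INF x\<in>X. SUP y\<in>Ybox ymax. cumLbar lam f c b t x y)"
  shows "cumLbar lam f c b t xt yt \<ge> (INF x\<in>X. SUP y\<in>Ybox ymax. cumLbar lam f c b t x y)
       \<and> (INF x\<in>X. SUP y\<in>Ybox ymax. cumLbar lam f c b t x y) - theta \<bullet> xss
           \<ge> cumLbar lam f c b t xt yt - theta \<bullet> xt"
proof -
  let ?F = "cumLbar lam f c b t"
  let ?Y = "Ybox ymax :: (real^'i) set"
  let ?S = "\<lambda>x. SUP y\<in>?Y. ?F x y"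
  note mm = assms(9)[unfolded global_minimax_def]
  have xt: "xt \<in> X" and yt: "yt \<in> ?Y" using mm by auto
  have Yne: "?Y \<noteq> {}" using yt by auto
  have h1: "?F xt y - theta \<bullet> xt \<le> ?F xt yt - theta \<bullet> xt" if "y \<in> ?Y" for y
    using mm that by auto
  have h2: "?F xt yt - theta \<bullet> xt \<le> (SUP y\<in>?Y. ?F x y - theta \<bullet> x)" if "x \<in> X" for x
    using mm that by auto
  have shift: "(SUP y\<in>?Y. ?F x y - theta \<bullet> x) = ?S x - theta \<bullet> x" for x
    by (rule sup_shift[OF Yne bddY])
  obtain B where B: "\<And>x. x \<in> X \<Longrightarrow> norm x \<le> B"
    using compact_imp_bounded[OF assms(1)] bounded_iff by blast
  have tb: "\<bar>theta \<bullet> x\<bar> \<le> norm theta * B" if "x \<in> X" for x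
    using Cauchy_Schwarz_ineq2[of theta x] B[OF that]
    by (meson mult_left_mono norm_ge_zero order_trans)
  have lowb: "?F xt yt - theta \<bullet> xt - norm theta * B \<le> ?S x" if "x \<in> X" for x
    using h2[OF that] shift[of x] tb[OF that] by auto
  have bddb: "bdd_below (?S ` X)"
    using lowb by (meson bdd_belowI2)
  have c1: "?S xt \<le> ?F xt yt"
    by (rule cSUP_least[OF Yne]) (use h1 in auto)
  have "(INF x\<in>X. ?S x) \<le> ?S xt" by (rule cINF_lower[OF bddb xt])
  with c1 have part1: "(INF x\<in>X. ?S x) \<le> ?F xt yt" by linarith
  have part2: "?F xt yt - theta \<bullet> xt \<le> (INF x\<in>X. ?S x) - theta \<bullet> xss"
    using h2[OF assms(10)] shift[of xss] assms(11) by simp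
  show ?thesis using part1 part2 by simp
qed

end
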